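(* Let $\Sigma$ be a finite alphabet and let $t$ be an unranked ordered $\Sigma$-labeled tree. Then $\|\mathrm{dag}(t)\| \le \|\mathrm{bdag}(t)\|$.
   Context: An unranked tree over $\Sigma$ is a finite rooted tree whose nodes are labeled by symbols of $\Sigma$ and in which the children of every node are linearly ordered (any node may have any finite number of children). The minimal dag $\mathrm{dag}(t)$ of a tree $t$ is obtained by merging all nodes that root identical subtrees (equal as ordered labeled trees); its nodes are in bijection with the distinct subtrees of $t$, and the node of a subtree $f(s_1,\dots,s_k)$ has $k$ ordered outgoing edges to the nodes of $s_1,\dots,s_k$. $\|\mathrm{dag}(t)\|$ denotes its number of nodes, i.e. the number of distinct subtrees of $t$. The first-child/next-sibling encoding $\mathrm{fcns}(t)$ is the binary tree with the same nodes and labels as $t$ in which the left child of a node $u$ is the first child of $u$ in $t$ (if it exists) and the right child of $u$ is the next sibling of $u$ in $t$ (if it exists); binary trees here have, at every node, an optional left child and an optional right child, which are distinguished. $\mathrm{bdag}(t)$ is the minimal dag of $\mathrm{fcns}(t)$ (merging identical subtrees of $\mathrm{fcns}(t)$, absent children not represented), and $\|\mathrm{bdag}(t)\|$ is its number of nodes, i.e. the number of distinct subtrees of $\mathrm{fcns}(t)$. *)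

theory Defs
  imports Main
begin

datatype 'a utree = Node 'a "'a utree list"

datatype 'a btree = BNode 'a "'a btree option" "'a btree option"

fun labels :: "'a utree \<Rightarrow> 'a set" where
  "labels (Node a ts) = insert a (\<Union>t\<in>set ts. labels t)"

fun usubtrees :: "'a utree \<Rightarrow> 'a utree set" where
  "usubtrees (Node a ts) = insert (Node a ts) (\<Union>t\<in>set ts. usubtrees t)"

fun bsubtrees :: "'a btree \<Rightarrow> 'a btree set" where
  "bsubtrees (BNode a l r) = insert (BNode a l r)
     ((case l of None \<Rightarrow> {} | Some x \<Rightarrow> bsubtrees x) \<union>
      (case r of None \<Rightarrow> {} | Some y \<Rightarrow> bsubtrees y))"

text \<open>First-child/next-sibling encoding of a list of siblings: the first element
  becomes the root, its left child encodes its children, its right child encodes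
  its following siblings.\<close>
fun fcns_forest :: "'a utree list \<Rightarrow> 'a btree option" where
  "fcns_forest [] = None"
| "fcns_forest (Node a cs # ts) = Some (BNode a (fcns_forest cs) (fcns_forest ts))"

fun fcns :: "'a utree \<Rightarrow> 'a btree" where
  "fcns (Node a cs) = BNode a (fcns_forest cs) None"

text \<open>Sizes of the minimal dags = numbers of distinct subtrees.\<close>
definition dag_size :: "'a utree \<Rightarrow> nat" where
  "dag_size t = card (usubtrees t)"

definition bdag_size :: "'a utree \<Rightarrow> nat" where
  "bdag_size t = card (bsubtrees (fcns t))"

end

theory Submission
  imports Defs
begin

fun dec :: "'a btree option \<Rightarrow> 'a utree list" where
  "dec None = []"
| "dec (Some (BNode a l r)) = Node a (dec l) # dec r"

fun hb :: "'a btree \<Rightarrow> 'a utree" where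
  "hb (BNode a l r) = Node a (dec l)"

fun fbs :: "'a btree option \<Rightarrow> 'a btree set" where
  "fbs None = {}"
| "fbs (Some x) = bsubtrees x"

lemma dec_fcns: "dec (fcns_forest ts) = ts"
  by (induction ts rule: fcns_forest.induct) auto

lemma fin_bsub: "finite (bsubtrees b)"
  by (induction b rule: bsubtrees.induct) (auto split: option.splits)

lemma cover: "\<forall>u \<in> (\<Union>t\<in>set ts. usubtrees t). \<exists>b \<in> fbs (fcns_forest ts). hb b = u"
proof (induction ts rule: fcns_forest.induct)
  case 1
  then show ?case by simp
next
  case (2 a cs ts)
  have IH1: "\<forall>u \<in> (\<Union>t\<in>set cs. usubtrees t). \<exists>b \<in> fbs (fcns_forest cs). hb b = u" using 2 by simp
  have IH2: "\<forall>u \<in> (\<Union>t\<in>set ts. usubtrees t). \<exists>b \<in> fbs (fcns_forest ts). hb b = u" using 2 by simp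
  have s1: "fbs (fcns_forest cs) \<subseteq> fbs (fcns_forest (Node a cs # ts))"
    by (cases "fcns_forest cs") auto
  have s2: "fbs (fcns_forest ts) \<subseteq> fbs (fcns_forest (Node a cs # ts))"
    by (cases "fcns_forest ts") auto
  have s0: "BNode a (fcns_forest cs) (fcns_forest ts) \<in> fbs (fcns_forest (Node a cs # ts))" by simp
  show ?case
  proof
    fix u assume "u \<in> (\<Union>t\<in>set (Node a cs # ts). usubtrees t)"
    then consider "u = Node a cs" | "u \<in> (\<Union>t\<in>set cs. usubtrees t)" | "u \<in> (\<Union>t\<in>set ts. usubtrees t)"
      by auto
    then show "\<exists>b \<in> fbs (fcns_forest (Node a cs # ts)). hb b = u"
    proof cases
      case 1 then show ?thesis using s0 by (intro bexI[of _ "BNode a (fcns_forest cs) (fcns_forest ts)"]) (auto simp: dec_fcns)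
    next
      case 2 then show ?thesis using IH1 s1 by blast
    next
      case 3 then show ?thesis using IH2 s2 by blast
    qed
  qed
qed

lemma sub_img: "usubtrees t \<subseteq> hb ` bsubtrees (fcns t)"
proof (cases t)
  case (Node a cs)
  have "\<forall>u \<in> (\<Union>t\<in>set cs. usubtrees t). \<exists>b \<in> fbs (fcns_forest cs). hb b = u" by (rule cover)
  moreover have "fbs (fcns_forest cs) \<subseteq> bsubtrees (fcns t)" using Node
    by (cases "fcns_forest cs") auto
  moreover have "fcns t \<in> bsubtrees (fcns t)" using Node by simp
  moreover have "hb (fcns t) = t" using Node by (simp add: dec_fcns)
  ultimately show ?thesis using Node by force
qed

theorem lemma2:
  fixes \<Sigma> :: "'a set" and t :: "'a utree"
  assumes "finite \<Sigma>" and "labels t \<subseteq> \<Sigma>"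
  shows "dag_size t \<le> bdag_size t"
proof -
  have "card (usubtrees t) \<le> card (hb ` bsubtrees (fcns t))"
    by (rule card_mono) (auto simp: fin_bsub sub_img)
  also have "\<dots> \<le> card (bsubtrees (fcns t))" by (rule card_image_le) (rule fin_bsub)
  finally show ?thesis by (simp add: dag_size_def bdag_size_def)
qed

end
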